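(* For every instance $\pi$ of the fully labeled one-dimensional rearrangement problem (LOR) on $m$ cells, the plan produced by the algorithm SweepCyclesLOR is valid and uses the minimum number of pick-n-swap operations among all valid plans for $\pi$.
   Context: Setting (LOR). A row of $m$ cells $1,\dots,m$, cell $i$ located at the point $i$ on the real line. Each cell initially holds exactly one item; items carry distinct labels $1,\dots,m$. An instance is a permutation $\pi$ of $\{1,\dots,m\}$, where $\pi_i$ is the label of the item initially in cell $i$; the goal is that item $i$ ends in cell $i$ for every $i$. A robot end-effector can hold at most one item; it starts at the rest position $p_0=$ cell $1$ holding nothing. A pick-n-swap operation performed at a cell $p$ is: if the end-effector holds nothing, pick up the item in $p$; if it holds an item and $p$ contains an item, exchange the two (the held item is put into $p$ and the item of $p$ becomes held); if it holds an item and $p$ is empty, put the held item into $p$. A plan is a sequence $P=(p_0,p_1,\dots,p_N)$ of cells: the end-effector travels from $p_0$ to $p_1$, performs a pick-n-swap there, travels to $p_2$, and so on, and finally returns to $p_{N+1}:=p_0$. It is valid if at the end every item $i$ is in cell $i$ and the end-effector holds nothing. $N$ is the number of pick-n-swaps of $P$. SweepCyclesLOR: while some cell $i$ holds an item with label $\ne i$, let $i$ be the smallest such cell; go to $i$ and pick up its item, say with label $g$; while $g\neq i$, go to cell $g$ and swap (item $g$ is placed in cell $g$ and the item previously in cell $g$, with label $g'$, becomes held; set $g:=g'$); finally go to cell $i$ (now empty) and place the held item (label $i$). When no misplaced item remains, return to cell $1$. *)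

theory Defs
  imports "HOL-Combinatorics.Permutations" "HOL-Library.While_Combinator"
begin

text \<open>A configuration: contents of the cells (Some label, or None if empty),
  and the content of the end-effector (Some label, or None if it holds nothing).\<close>
type_synonym conf = "(nat \<Rightarrow> nat option) \<times> nat option"

text \<open>Pick-n-swap at cell p: in all three cases of the definition, the held content
  and the content of cell p are exchanged.\<close>
definition pns :: "nat \<Rightarrow> conf \<Rightarrow> conf" where
  "pns p c = ((fst c)(p := snd c), fst c p)"

definition exec :: "nat list \<Rightarrow> conf \<Rightarrow> conf" where
  "exec ps c = fold pns ps c"

definition init_conf :: "nat \<Rightarrow> (nat \<Rightarrow> nat) \<Rightarrow> conf" where
  "init_conf m \<pi> = ((\<lambda>i. if i \<in> {1..m} then Some (\<pi> i) else None), None)"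

text \<open>A plan (p_0,p_1,...,p_N) with p_0 = cell 1 is represented by the list [p_1,...,p_N]
  of cells where pick-n-swaps are performed; N is its length. The travel back to p_0
  performs no operation.\<close>
definition valid_plan :: "nat \<Rightarrow> (nat \<Rightarrow> nat) \<Rightarrow> nat list \<Rightarrow> bool" where
  "valid_plan m \<pi> ps \<longleftrightarrow> set ps \<subseteq> {1..m} \<and>
     (let c = exec ps (init_conf m \<pi>) in (\<forall>i\<in>{1..m}. fst c i = Some i) \<and> snd c = None)"

definition sweep_inner :: "nat \<Rightarrow> conf \<times> nat list \<Rightarrow> (conf \<times> nat list) option" where
  "sweep_inner i = while_option (\<lambda>(c, ps). snd c \<noteq> Some i)
      (\<lambda>(c, ps). let g = the (snd c) in (pns g c, ps @ [g]))"

definition sweep_body :: "nat \<Rightarrow> conf \<times> nat list \<Rightarrow> conf \<times> nat list" where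
  "sweep_body m = (\<lambda>(c, ps).
     let i = (LEAST i. 1 \<le> i \<and> i \<le> m \<and> fst c i \<noteq> Some i);
         (c2, ps2) = the (sweep_inner i (pns i c, ps @ [i]))
     in (pns i c2, ps2 @ [i]))"

definition sweep_cycles_LOR :: "nat \<Rightarrow> (nat \<Rightarrow> nat) \<Rightarrow> nat list" where
  "sweep_cycles_LOR m \<pi> = snd (the (while_option
      (\<lambda>(c, ps). \<exists>i\<in>{1..m}. fst c i \<noteq> Some i) (sweep_body m) (init_conf m \<pi>, [])))"

end

theory Submission
  imports Defs
begin

lemma exec_append: "exec (xs @ ys) c = exec ys (exec xs c)"
  by (simp add: exec_def)

lemma exec_snoc: "exec (xs @ [p]) c = pns p (exec xs c)"
  by (simp add: exec_def)

lemma exec_Nil[simp]: "exec [] c = c"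
  by (simp add: exec_def)

lemma pns_fst[simp]: "fst (pns p c) = (fst c)(p := snd c)"
  and pns_snd[simp]: "snd (pns p c) = fst c p"
  by (simp_all add: pns_def)

lemma exec_take_Suc:
  "t < length ps \<Longrightarrow> exec (take (Suc t) ps) c = pns (ps ! t) (exec (take t ps) c)"
  by (simp add: take_Suc_conv_app_nth exec_snoc)

lemma change:
  assumes "t \<le> u" "u \<le> length ps"
    "fst (exec (take t ps) c0) x \<noteq> fst (exec (take u ps) c0) x"
  shows "\<exists>s. t \<le> s \<and> s < u \<and> ps ! s = x \<and>
           snd (exec (take s ps) c0) = fst (exec (take u ps) c0) x"
  using assms
proof (induction u)
  case 0
  then show ?case by simp
next
  case (Suc u)
  have st: "exec (take (Suc u) ps) c0 = pns (ps ! u) (exec (take u ps) c0)"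
    using Suc.prems by (simp add: exec_take_Suc)
  show ?case
  proof (cases "ps ! u = x")
    case True
    then show ?thesis using st Suc.prems
      by (intro exI[of _ u]) (auto simp: le_Suc_eq)
  next
    case False
    then have eq: "fst (exec (take (Suc u) ps) c0) x = fst (exec (take u ps) c0) x"
      using st by simp
    show ?thesis
    proof (cases "t = Suc u")
      case True
      then show ?thesis using Suc.prems by simp
    next
      case False
      then have "t \<le> u" using Suc.prems by simp
      from Suc.IH[OF this] Suc.prems eq obtain s where
        "t \<le> s \<and> s < u \<and> ps ! s = x \<and> snd (exec (take s ps) c0) = fst (exec (take u ps) c0) x"
        by auto
      then show ?thesis using eq by (intro exI[of _ s]) auto
    qed
  qed
qed

lemma nochange:
  assumes "t \<le> u" "u \<le> length ps" "\<And>s. t \<le> s \<Longrightarrow> s < u \<Longrightarrow> ps ! s \<noteq> x"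
  shows "fst (exec (take u ps) c0) x = fst (exec (take t ps) c0) x"
  using change[OF assms(1,2), of c0 x] assms(3) by fastforce

definition inj_conf :: "conf \<Rightarrow> bool" where
  "inj_conf c \<longleftrightarrow> (\<forall>a b v. fst c a = Some v \<longrightarrow> fst c b = Some v \<longrightarrow> a = b) \<and>
     (\<forall>a v. fst c a = Some v \<longrightarrow> snd c \<noteq> Some v)"

lemma inj_conf_pns: "inj_conf c \<Longrightarrow> inj_conf (pns p c)"
  unfolding inj_conf_def by simp metis

lemma inj_conf_init:
  assumes "\<pi> permutes {1..m}" shows "inj_conf (init_conf m \<pi>)"
  using permutes_inj[OF assms] unfolding inj_conf_def init_conf_def
  by (auto simp: inj_def split: if_splits)

lemma inj_conf_exec: "inj_conf c \<Longrightarrow> inj_conf (exec ps c)"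
  unfolding exec_def by (induction ps arbitrary: c) (simp_all add: inj_conf_pns)

lemma lower:
  assumes perm: "\<pi> permutes {1..m}" and valid: "valid_plan m \<pi> ps"
    and finZ: "finite Zs"
    and Zp: "\<And>Z. Z \<in> Zs \<Longrightarrow> \<pi> ` Z = Z \<and> Z \<noteq> {} \<and> (\<forall>z\<in>Z. \<pi> z \<noteq> z)"
    and disj: "\<And>A B. A \<in> Zs \<Longrightarrow> B \<in> Zs \<Longrightarrow> A \<noteq> B \<Longrightarrow> A \<inter> B = {}"
    and sub: "\<Union>Zs \<subseteq> {1..m}"
  shows "card {j\<in>{1..m}. \<pi> j \<noteq> j} + card Zs \<le> length ps"
proof -
  define L where "L = length ps"
  define st where "st t = exec (take t ps) (init_conf m \<pi>)" for t
  have st0: "fst (st 0) x = Some (\<pi> x)" if "x \<in> {1..m}" for x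
    using that by (simp add: st_def init_conf_def)
  have stL: "fst (st L) x = Some x" if "x \<in> {1..m}" for x
    using valid that by (simp add: st_def L_def valid_plan_def Let_def)
  have injst: "inj_conf (st t)" for t
    unfolding st_def by (intro inj_conf_exec inj_conf_init perm)
  define A where "A = {s. s < L \<and> snd (st s) = Some (ps ! s)}"
  define B where "B = {s. s < L \<and> snd (st s) \<noteq> Some (ps ! s)}"
  have AB: "A \<union> B = {..<L}" "A \<inter> B = {}" unfolding A_def B_def by auto
  have cardAB: "card A + card B = L"
    using AB card_Un_disjoint[of A B] by (metis card_lessThan finite_Un finite_lessThan)
  have misA: "x \<in> (\<lambda>s. ps ! s) ` A" if x: "x \<in> {1..m}" "\<pi> x \<noteq> x" for x
  proof -
    have "fst (st 0) x \<noteq> fst (st L) x" using st0 stL x by simp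
    then obtain s where "s < L" "ps ! s = x" "snd (st s) = fst (st L) x"
      using change[of 0 L ps "init_conf m \<pi>" x] unfolding st_def L_def by auto
    then show ?thesis using stL[OF x(1)] unfolding A_def by auto
  qed
  have "card {j\<in>{1..m}. \<pi> j \<noteq> j} \<le> card ((\<lambda>s. ps ! s) ` A)"
    by (rule card_mono) (use misA in \<open>auto simp: A_def\<close>)
  also have "\<dots> \<le> card A" by (rule card_image_le) (simp add: A_def)
  finally have c1: "card {j\<in>{1..m}. \<pi> j \<noteq> j} \<le> card A" .
  define f where "f Z = (LEAST s. s < L \<and> ps ! s \<in> Z)" for Z
  have fZ: "f Z \<in> B \<and> ps ! f Z \<in> Z" if Z: "Z \<in> Zs" for Z
  proof -
    obtain z where z: "z \<in> Z" using Zp[OF Z] by auto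
    have zm: "z \<in> {1..m}" using z Z sub by auto
    have "\<pi> z \<noteq> z" using Zp[OF Z] z by auto
    then have "fst (st 0) z \<noteq> fst (st L) z" using st0 stL zm by simp
    then obtain s where "s < L" "ps ! s = z"
      using change[of 0 L ps "init_conf m \<pi>" z] unfolding st_def L_def by auto
    then have ex: "\<exists>s. s < L \<and> ps ! s \<in> Z" using z by auto
    have ft: "f Z < L \<and> ps ! f Z \<in> Z" unfolding f_def by (rule LeastI_ex[OF ex])
    have before: "ps ! s \<notin> Z" if "s < f Z" for s
      using not_less_Least[of s "\<lambda>s. s < L \<and> ps ! s \<in> Z"] that ft unfolding f_def by auto
    have keep: "fst (st (f Z)) z' = Some (\<pi> z')" if "z' \<in> Z" for z'
    proof -
      have "fst (st (f Z)) z' = fst (st 0) z'"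
        unfolding st_def
        by (rule nochange) (use ft before that L_def in auto)
      then show ?thesis using st0 that Z sub by auto
    qed
    have "ps ! f Z \<in> \<pi> ` Z" using ft Zp[OF Z] by auto
    then obtain z' where z': "z' \<in> Z" "ps ! f Z = \<pi> z'" by auto
    have "fst (st (f Z)) z' = Some (ps ! f Z)" using keep[OF z'(1)] z'(2) by simp
    then have "snd (st (f Z)) \<noteq> Some (ps ! f Z)" using injst[of "f Z"] unfolding inj_conf_def by blast
    then show ?thesis using ft unfolding B_def by auto
  qed
  have "inj_on f Zs"
  proof (rule inj_onI)
    fix X Y assume "X \<in> Zs" "Y \<in> Zs" "f X = f Y"
    then have "ps ! f X \<in> X \<inter> Y" using fZ[of X] fZ[of Y] by auto
    then show "X = Y" using disj \<open>X \<in> Zs\<close> \<open>Y \<in> Zs\<close> by blast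
  qed
  then have c2: "card Zs \<le> card B"
    by (rule card_inj_on_le) (use fZ in \<open>auto simp: B_def\<close>)
  show ?thesis using c1 c2 cardAB L_def by simp
qed


definition Dset :: "nat \<Rightarrow> (nat \<Rightarrow> nat) \<Rightarrow> conf \<Rightarrow> nat set" where
  "Dset m \<pi> c = {j\<in>{1..m}. fst c j = Some j \<and> \<pi> j \<noteq> j}"

definition outer_inv :: "nat \<Rightarrow> (nat \<Rightarrow> nat) \<Rightarrow> conf \<Rightarrow> nat list \<Rightarrow> bool" where
  "outer_inv m \<pi> c ps \<longleftrightarrow> snd c = None \<and>
     (\<forall>j\<in>{1..m}. fst c j = Some j \<or> fst c j = Some (\<pi> j)) \<and>
     exec ps (init_conf m \<pi>) = c \<and> set ps \<subseteq> {1..m} \<and>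
     \<pi> ` Dset m \<pi> c = Dset m \<pi> c \<and>
     (\<exists>Zs. finite Zs \<and> (\<forall>Z\<in>Zs. \<pi> ` Z = Z \<and> Z \<noteq> {} \<and> (\<forall>z\<in>Z. \<pi> z \<noteq> z)) \<and>
        (\<forall>A\<in>Zs. \<forall>B\<in>Zs. A \<noteq> B \<longrightarrow> A \<inter> B = {}) \<and>
        \<Union>Zs = Dset m \<pi> c \<and> length ps = card (Dset m \<pi> c) + card Zs)"

definition inner_inv :: "nat \<Rightarrow> (nat \<Rightarrow> nat) \<Rightarrow> conf \<Rightarrow> nat list \<Rightarrow> nat \<Rightarrow> conf \<Rightarrow> nat list \<Rightarrow> bool" where
  "inner_inv m \<pi> c0 ps0 i c ps \<longleftrightarrow> (\<exists>N g. snd c = Some g \<and> g \<in> {1..m} \<and> fst c i = None \<and>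
     i \<notin> N \<and> g \<notin> N \<and> N \<subseteq> {1..m} \<and> \<pi> ` insert i N = insert g N \<and>
     (\<forall>j\<in>N. fst c j = Some j \<and> fst c0 j = Some (\<pi> j) \<and> \<pi> j \<noteq> j) \<and>
     (\<forall>j. j \<notin> insert i N \<longrightarrow> fst c j = fst c0 j) \<and>
     exec ps (init_conf m \<pi>) = c \<and> set ps \<subseteq> {1..m} \<and> length ps = length ps0 + 1 + card N)"

lemma inner_start:
  assumes perm: "\<pi> permutes {1..m}" and oi: "outer_inv m \<pi> c0 ps0"
    and i: "i \<in> {1..m}" "fst c0 i = Some (\<pi> i)"
  shows "inner_inv m \<pi> c0 ps0 i (pns i c0) (ps0 @ [i])"
  unfolding inner_inv_def
proof (intro exI[of _ "{}"] exI[of _ "\<pi> i"])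
  have "\<pi> i \<in> {1..m}" using permutes_in_image[OF perm] i by simp
  then show "snd (pns i c0) = Some (\<pi> i) \<and> \<pi> i \<in> {1..m} \<and> fst (pns i c0) i = None \<and>
    i \<notin> {} \<and> \<pi> i \<notin> {} \<and> {} \<subseteq> {1..m} \<and> \<pi> ` {i} = {\<pi> i} \<and>
    (\<forall>j\<in>{}. fst (pns i c0) j = Some j \<and> fst c0 j = Some (\<pi> j) \<and> \<pi> j \<noteq> j) \<and>
    (\<forall>j. j \<notin> {i} \<longrightarrow> fst (pns i c0) j = fst c0 j) \<and>
    exec (ps0 @ [i]) (init_conf m \<pi>) = pns i c0 \<and> set (ps0 @ [i]) \<subseteq> {1..m} \<and>
    length (ps0 @ [i]) = length ps0 + 1 + card {}"
    using oi i by (auto simp: outer_inv_def exec_snoc)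
qed

lemma inner_step:
  assumes perm: "\<pi> permutes {1..m}" and oi: "outer_inv m \<pi> c0 ps0"
    and i: "i \<in> {1..m}" "fst c0 i = Some (\<pi> i)" "\<pi> i \<noteq> i"
    and J: "inner_inv m \<pi> c0 ps0 i c ps" and ne: "snd c \<noteq> Some i"
  shows "inner_inv m \<pi> c0 ps0 i (pns (the (snd c)) c) (ps @ [the (snd c)]) \<and>
    card {j\<in>{1..m}. fst (pns (the (snd c)) c) j \<noteq> Some j} < card {j\<in>{1..m}. fst c j \<noteq> Some j}"
proof -
  obtain N g where J': "snd c = Some g" "g \<in> {1..m}" "fst c i = None"
     "i \<notin> N" "g \<notin> N" "N \<subseteq> {1..m}" "\<pi> ` insert i N = insert g N"
     "\<forall>j\<in>N. fst c j = Some j \<and> fst c0 j = Some (\<pi> j) \<and> \<pi> j \<noteq> j"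
     "\<forall>j. j \<notin> insert i N \<longrightarrow> fst c j = fst c0 j"
     "exec ps (init_conf m \<pi>) = c" "set ps \<subseteq> {1..m}" "length ps = length ps0 + 1 + card N"
    using J unfolding inner_inv_def by blast
  have gi: "g \<noteq> i" using ne J'(1) by simp
  have injp: "inj \<pi>" using permutes_inj[OF perm] .
  have D: "\<pi> ` Dset m \<pi> c0 = Dset m \<pi> c0"
    and cases0: "\<forall>j\<in>{1..m}. fst c0 j = Some j \<or> fst c0 j = Some (\<pi> j)"
    using oi unfolding outer_inv_def by auto
  have "g \<in> \<pi> ` insert i N" using J'(7) by simp
  then obtain x where x: "x \<in> insert i N" "g = \<pi> x" by auto
  have xmis: "fst c0 x = Some (\<pi> x) \<and> \<pi> x \<noteq> x" using x(1) J'(8) i by auto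
  have xnD: "x \<notin> Dset m \<pi> c0" using xmis unfolding Dset_def by auto
  have gni: "g \<notin> insert i N" using gi J'(5) by simp
  have c0g: "fst c0 g = Some (\<pi> g) \<and> \<pi> g \<noteq> g"
  proof (rule ccontr)
    assume "\<not> ?thesis"
    then have fg: "fst c0 g = Some g" using cases0 J'(2) by force
    show False
    proof (cases "\<pi> g = g")
      case True
      then have "x = g" using x(2) injp by (metis injD)
      then show False using x(1) gni by simp
    next
      case False
      then have "g \<in> Dset m \<pi> c0" using fg J'(2) unfolding Dset_def by simp
      then have "g \<in> \<pi> ` Dset m \<pi> c0" using D by simp
      then obtain y where "y \<in> Dset m \<pi> c0" "\<pi> y = g" by auto
      then have "y = x" using x(2) injp by (metis injD)
      then show False using xnD \<open>y \<in> Dset m \<pi> c0\<close> by simp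
    qed
  qed
  have cg: "fst c g = Some (\<pi> g)" using J'(9) gni c0g by simp
  have pg: "\<pi> g \<in> {1..m}" using permutes_in_image[OF perm] J'(2) by simp
  have pgN: "\<pi> g \<notin> insert g N"
  proof
    assume "\<pi> g \<in> insert g N"
    then have "\<pi> g \<in> N" using c0g by auto
    then have "\<pi> g \<in> \<pi> ` insert i N" using J'(7) by auto
    then obtain y where "\<pi> g = \<pi> y" "y \<in> insert i N" by (rule imageE)
    then have "y = g" using injp by (metis injD)
    then show False using gni \<open>y \<in> insert i N\<close> by simp
  qed
  have finN: "finite N" using J'(6) finite_subset by blast
  let ?c = "pns g c"
  have inv: "inner_inv m \<pi> c0 ps0 i ?c (ps @ [g])"
    unfolding inner_inv_def
  proof (intro exI[of _ "insert g N"] exI[of _ "\<pi> g"] conjI)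
    show "snd ?c = Some (\<pi> g)" using cg by simp
    show "\<pi> g \<in> {1..m}" by fact
    show "fst ?c i = None" using J'(3) gi by simp
    show "i \<notin> insert g N" using gi J'(4) by simp
    show "\<pi> g \<notin> insert g N" by fact
    show "insert g N \<subseteq> {1..m}" using J'(2,6) by simp
    show "\<pi> ` insert i (insert g N) = insert (\<pi> g) (insert g N)"
    proof -
      have "insert i (insert g N) = insert g (insert i N)" by blast
      then show ?thesis using J'(7) by (simp only: image_insert)
    qed
    show "\<forall>j\<in>insert g N. fst ?c j = Some j \<and> fst c0 j = Some (\<pi> j) \<and> \<pi> j \<noteq> j"
    proof
      fix j assume j: "j \<in> insert g N"
      show "fst ?c j = Some j \<and> fst c0 j = Some (\<pi> j) \<and> \<pi> j \<noteq> j"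
      proof (cases "j = g")
        case True then show ?thesis using J'(1) c0g by simp
      next
        case False
        then have "j \<in> N" using j by simp
        then have "fst c j = Some j \<and> fst c0 j = Some (\<pi> j) \<and> \<pi> j \<noteq> j" using J'(8) by blast
        then show ?thesis using False by simp
      qed
    qed
    show "\<forall>j. j \<notin> insert i (insert g N) \<longrightarrow> fst ?c j = fst c0 j"
      using J'(9) by auto
    show "exec (ps @ [g]) (init_conf m \<pi>) = ?c" using J'(10) by (simp add: exec_snoc)
    show "set (ps @ [g]) \<subseteq> {1..m}" using J'(11,2) by simp
    show "length (ps @ [g]) = length ps0 + 1 + card (insert g N)"
      using J'(12,5) finN by simp
  qed
  have "{j\<in>{1..m}. fst ?c j \<noteq> Some j} = {j\<in>{1..m}. fst c j \<noteq> Some j} - {g}"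
    using J'(1) by (auto split: if_splits)
  have "g \<in> {j\<in>{1..m}. fst c j \<noteq> Some j}" using cg c0g J'(2) by simp
  have "card {j\<in>{1..m}. fst ?c j \<noteq> Some j} < card {j\<in>{1..m}. fst c j \<noteq> Some j}"
  proof -
    have "finite {j\<in>{1..m}. fst c j \<noteq> Some j}" by simp
    from card_Diff1_less[OF this \<open>g \<in> {j\<in>{1..m}. fst c j \<noteq> Some j}\<close>]
    show ?thesis using \<open>{j\<in>{1..m}. fst ?c j \<noteq> Some j} = {j\<in>{1..m}. fst c j \<noteq> Some j} - {g}\<close> by simp
  qed
  then show ?thesis using inv J'(1) by simp
qed



lemma init_outer:
  assumes perm: "\<pi> permutes {1..m}"
  shows "outer_inv m \<pi> (init_conf m \<pi>) []"
proof -
  have D: "Dset m \<pi> (init_conf m \<pi>) = {}" by (auto simp: Dset_def init_conf_def)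
  show ?thesis unfolding outer_inv_def D
    by (intro conjI exI[of _ "{}"]) (auto simp: init_conf_def)
qed

lemma inner_terminates:
  assumes perm: "\<pi> permutes {1..m}" and oi: "outer_inv m \<pi> c0 ps0"
    and i: "i \<in> {1..m}" "fst c0 i = Some (\<pi> i)" "\<pi> i \<noteq> i"
  shows "\<exists>c2 ps2. sweep_inner i (pns i c0, ps0 @ [i]) = Some (c2, ps2) \<and>
           inner_inv m \<pi> c0 ps0 i c2 ps2 \<and> snd c2 = Some i"
proof -
  let ?b = "(\<lambda>(c, ps). snd c \<noteq> Some i) :: conf \<times> nat list \<Rightarrow> bool"
  let ?f = "(\<lambda>(c, ps). let g = the (snd c) in (pns g c, ps @ [g])) :: conf \<times> nat list \<Rightarrow> conf \<times> nat list"
  let ?P = "\<lambda>s. inner_inv m \<pi> c0 ps0 i (fst s) (snd s)"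
  have step: "?P (?f s) \<and> (\<lambda>s. card {j\<in>{1..m}. fst (fst s) j \<noteq> Some j}) (?f s)
      < (\<lambda>s. card {j\<in>{1..m}. fst (fst s) j \<noteq> Some j}) s" if "?P s" "?b s" for s
  proof -
    obtain c ps where s: "s = (c, ps)" by (cases s)
    show ?thesis using inner_step[OF perm oi i, of c ps] that s by (simp add: Let_def)
  qed
  have st: "?P (pns i c0, ps0 @ [i])" using inner_start[OF perm oi i(1,2)] by simp
  obtain t where t: "while_option ?b ?f (pns i c0, ps0 @ [i]) = Some t"
    using measure_while_option_Some[of ?P ?b ?f, OF step st] by blast
  have Pt: "?P t" by (rule while_option_rule[of ?P ?b ?f, OF _ t st]) (use step in blast)
  have bt: "\<not> ?b t" using while_option_stop[OF t] .
  obtain c2 ps2 where "t = (c2, ps2)" by (cases t)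
  then show ?thesis using t Pt bt unfolding sweep_inner_def by auto
qed


lemma body_step:
  assumes perm: "\<pi> permutes {1..m}" and oi: "outer_inv m \<pi> c ps"
    and ex: "\<exists>i\<in>{1..m}. fst c i \<noteq> Some i"
  shows "outer_inv m \<pi> (fst (sweep_body m (c, ps))) (snd (sweep_body m (c, ps))) \<and>
    card {j\<in>{1..m}. fst (fst (sweep_body m (c, ps))) j \<noteq> Some j} < card {j\<in>{1..m}. fst c j \<noteq> Some j}"
proof -
  define i where "i = (LEAST i. 1 \<le> i \<and> i \<le> m \<and> fst c i \<noteq> Some i)"
  have "1 \<le> i \<and> i \<le> m \<and> fst c i \<noteq> Some i"
    unfolding i_def by (rule LeastI_ex) (use ex in auto)
  then have im: "i \<in> {1..m}" and ci: "fst c i \<noteq> Some i" by auto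
  have O: "snd c = None" "\<forall>j\<in>{1..m}. fst c j = Some j \<or> fst c j = Some (\<pi> j)"
     "exec ps (init_conf m \<pi>) = c" "set ps \<subseteq> {1..m}" "\<pi> ` Dset m \<pi> c = Dset m \<pi> c"
    using oi unfolding outer_inv_def by auto
  obtain Zs where Zs: "finite Zs" "\<forall>Z\<in>Zs. \<pi> ` Z = Z \<and> Z \<noteq> {} \<and> (\<forall>z\<in>Z. \<pi> z \<noteq> z)"
     "\<forall>A\<in>Zs. \<forall>B\<in>Zs. A \<noteq> B \<longrightarrow> A \<inter> B = {}" "\<Union>Zs = Dset m \<pi> c"
     "length ps = card (Dset m \<pi> c) + card Zs"
    using oi unfolding outer_inv_def by (elim conjE exE) metis
  have cpi: "fst c i = Some (\<pi> i)" using O(2) im ci by blast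
  have pii: "\<pi> i \<noteq> i" using cpi ci by auto
  obtain c2 ps2 where res: "sweep_inner i (pns i c, ps @ [i]) = Some (c2, ps2)"
    and J: "inner_inv m \<pi> c ps i c2 ps2" and sc2: "snd c2 = Some i"
    using inner_terminates[OF perm oi im cpi pii] by blast
  have body: "sweep_body m (c, ps) = (pns i c2, ps2 @ [i])"
    unfolding sweep_body_def Let_def by (simp only: prod.case i_def[symmetric]) (simp add: res)
  obtain N g where J': "snd c2 = Some g" "g \<in> {1..m}" "fst c2 i = None"
     "i \<notin> N" "g \<notin> N" "N \<subseteq> {1..m}" "\<pi> ` insert i N = insert g N"
     "\<forall>j\<in>N. fst c2 j = Some j \<and> fst c j = Some (\<pi> j) \<and> \<pi> j \<noteq> j"
     "\<forall>j. j \<notin> insert i N \<longrightarrow> fst c2 j = fst c j"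
     "exec ps2 (init_conf m \<pi>) = c2" "set ps2 \<subseteq> {1..m}" "length ps2 = length ps + 1 + card N"
    using J unfolding inner_inv_def by blast
  have gi: "g = i" using J'(1) sc2 by simp
  define Z where "Z = insert i N"
  define c3 where "c3 = pns i c2"
  have fc3: "fst c3 = (fst c2)(i := Some i)" using sc2 by (simp add: c3_def)
  have sc3: "snd c3 = None" using J'(3) by (simp add: c3_def)
  have finN: "finite N" using J'(6) finite_subset by blast
  have Zsub: "Z \<subseteq> {1..m}" using J'(6) im by (simp add: Z_def)
  have Zfix: "fst c3 j = Some j \<and> \<pi> j \<noteq> j \<and> fst c j = Some (\<pi> j)" if "j \<in> Z" for j
  proof (cases "j = i")
    case True then show ?thesis using fc3 pii cpi by simp
  next
    case False
    then have "j \<in> N" using that by (simp add: Z_def)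
    then have "fst c2 j = Some j \<and> fst c j = Some (\<pi> j) \<and> \<pi> j \<noteq> j" using J'(8) by blast
    then show ?thesis using False fc3 by simp
  qed
  have Zout: "fst c3 j = fst c j" if "j \<notin> Z" for j
  proof -
    have "j \<noteq> i" using that by (simp add: Z_def)
    then show ?thesis using fc3 J'(9) that by (simp add: Z_def)
  qed
  have Zdisj: "Z \<inter> Dset m \<pi> c = {}"
  proof -
    have "j \<notin> Dset m \<pi> c" if "j \<in> Z" for j using Zfix[OF that] by (auto simp: Dset_def)
    then show ?thesis by blast
  qed
  have D3: "Dset m \<pi> c3 = Dset m \<pi> c \<union> Z"
  proof (intro set_eqI iffI)
    fix j assume "j \<in> Dset m \<pi> c3"
    then show "j \<in> Dset m \<pi> c \<union> Z"
      using Zout[of j] by (cases "j \<in> Z") (auto simp: Dset_def)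
  next
    fix j assume j: "j \<in> Dset m \<pi> c \<union> Z"
    show "j \<in> Dset m \<pi> c3"
    proof (cases "j \<in> Z")
      case True then show ?thesis using Zfix[OF True] Zsub by (auto simp: Dset_def)
    next
      case False then show ?thesis using j Zout[OF False] by (auto simp: Dset_def)
    qed
  qed
  have piZ: "\<pi> ` Z = Z" using J'(7) gi by (simp add: Z_def)
  have Zne: "Z \<noteq> {}" by (simp add: Z_def)
  have ZnZs: "Z \<notin> Zs"
  proof
    assume "Z \<in> Zs"
    then have "Z \<subseteq> Dset m \<pi> c" using Zs(4) by blast
    then show False using Zdisj Zne by blast
  qed
  have finD: "finite (Dset m \<pi> c)" by (simp add: Dset_def)
  have cardZ: "card Z = card N + 1" using finN J'(4) by (simp add: Z_def)
  have inv3: "outer_inv m \<pi> c3 (ps2 @ [i])"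
    unfolding outer_inv_def
  proof (intro conjI exI[of _ "insert Z Zs"])
    show "snd c3 = None" by fact
    show "\<forall>j\<in>{1..m}. fst c3 j = Some j \<or> fst c3 j = Some (\<pi> j)"
    proof
      fix j assume j: "j \<in> {1..m}"
      show "fst c3 j = Some j \<or> fst c3 j = Some (\<pi> j)"
        using Zfix[of j] Zout[of j] O(2) j by (cases "j \<in> Z") auto
    qed
    show "exec (ps2 @ [i]) (init_conf m \<pi>) = c3" using J'(10) by (simp add: exec_snoc c3_def)
    show "set (ps2 @ [i]) \<subseteq> {1..m}" using J'(11) im by simp
    show "\<pi> ` Dset m \<pi> c3 = Dset m \<pi> c3" using D3 O(5) piZ by (simp add: image_Un)
    show "finite (insert Z Zs)" using Zs(1) by simp
    show "\<forall>Z'\<in>insert Z Zs. \<pi> ` Z' = Z' \<and> Z' \<noteq> {} \<and> (\<forall>z\<in>Z'. \<pi> z \<noteq> z)"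
    proof
      fix Z' assume Z': "Z' \<in> insert Z Zs"
      show "\<pi> ` Z' = Z' \<and> Z' \<noteq> {} \<and> (\<forall>z\<in>Z'. \<pi> z \<noteq> z)"
      proof (cases "Z' = Z")
        case True then show ?thesis using piZ Zne Zfix by simp
      next
        case False then show ?thesis using Z' Zs(2) by simp
      qed
    qed
    show "\<forall>A\<in>insert Z Zs. \<forall>B\<in>insert Z Zs. A \<noteq> B \<longrightarrow> A \<inter> B = {}"
    proof (intro ballI impI)
      fix A B assume A: "A \<in> insert Z Zs" and B: "B \<in> insert Z Zs" and AB: "A \<noteq> B"
      have sub: "X \<subseteq> Dset m \<pi> c" if "X \<in> Zs" for X using that Zs(4) by blast
      show "A \<inter> B = {}"
      proof (cases "A = Z")
        case True
        then have "B \<in> Zs" using B AB by simp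
        then show ?thesis using True sub[of B] Zdisj by blast
      next
        case False
        then have A': "A \<in> Zs" using A by simp
        show ?thesis
        proof (cases "B = Z")
          case True then show ?thesis using A' sub[of A] Zdisj by blast
        next
          case False then show ?thesis using A' B AB Zs(3) by simp
        qed
      qed
    qed
    show "\<Union>(insert Z Zs) = Dset m \<pi> c3" using D3 Zs(4) by blast
    show "length (ps2 @ [i]) = card (Dset m \<pi> c3) + card (insert Z Zs)"
    proof -
      have finZ: "finite Z" using finite_subset[OF Zsub] by simp
      have "card (Dset m \<pi> c \<union> Z) = card (Dset m \<pi> c) + card Z"
        by (rule card_Un_disjoint[OF finD finZ]) (use Zdisj in blast)
      moreover have "card (insert Z Zs) = card Zs + 1" using Zs(1) ZnZs by simp
      ultimately show ?thesis using J'(12) Zs(5) cardZ D3 by simp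
    qed
  qed
  have "{j\<in>{1..m}. fst c3 j \<noteq> Some j} \<subset> {j\<in>{1..m}. fst c j \<noteq> Some j}"
  proof
    show "{j\<in>{1..m}. fst c3 j \<noteq> Some j} \<subseteq> {j\<in>{1..m}. fst c j \<noteq> Some j}"
    proof
      fix j assume j: "j \<in> {j\<in>{1..m}. fst c3 j \<noteq> Some j}"
      show "j \<in> {j\<in>{1..m}. fst c j \<noteq> Some j}"
      proof (cases "j \<in> Z")
        case True then show ?thesis using Zfix[OF True] j by simp
      next
        case False then show ?thesis using Zout[OF False] j by simp
      qed
    qed
    show "{j\<in>{1..m}. fst c3 j \<noteq> Some j} \<noteq> {j\<in>{1..m}. fst c j \<noteq> Some j}"
    proof
      assume "{j\<in>{1..m}. fst c3 j \<noteq> Some j} = {j\<in>{1..m}. fst c j \<noteq> Some j}"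
      moreover have "i \<in> {j\<in>{1..m}. fst c j \<noteq> Some j}" using im ci by simp
      moreover have "fst c3 i = Some i" using fc3 by simp
      ultimately show False by auto
    qed
  qed
  then have "card {j\<in>{1..m}. fst c3 j \<noteq> Some j} < card {j\<in>{1..m}. fst c j \<noteq> Some j}"
    by (rule psubset_card_mono[rotated]) simp
  then show ?thesis using inv3 body c3_def by simp
qed


theorem proposition1:
  fixes m :: nat and \<pi> :: "nat \<Rightarrow> nat"
  assumes "\<pi> permutes {1..m}"
  shows "valid_plan m \<pi> (sweep_cycles_LOR m \<pi>) \<and>
         (\<forall>ps. valid_plan m \<pi> ps \<longrightarrow> length (sweep_cycles_LOR m \<pi>) \<le> length ps)"
proof -
  note perm = assms
  let ?b = "(\<lambda>(c, ps). \<exists>i\<in>{1..m}. fst c i \<noteq> Some i) :: conf \<times> nat list \<Rightarrow> bool"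
  let ?P = "\<lambda>s. outer_inv m \<pi> (fst s) (snd s)"
  let ?f = "\<lambda>s. card {j\<in>{1..m}. fst (fst s) j \<noteq> Some j}"
  have step: "?P (sweep_body m s) \<and> ?f (sweep_body m s) < ?f s" if "?P s" "?b s" for s
  proof -
    obtain c ps where s: "s = (c, ps)" by (cases s)
    show ?thesis using body_step[OF perm, of c ps] that s by simp
  qed
  have st: "?P (init_conf m \<pi>, [])" using init_outer[OF perm] by simp
  obtain t where t: "while_option ?b (sweep_body m) (init_conf m \<pi>, []) = Some t"
    using measure_while_option_Some[of ?P ?b "sweep_body m", OF step st] by blast
  have Pt: "?P t" by (rule while_option_rule[of ?P ?b "sweep_body m", OF _ t st]) (use step in blast)
  have bt: "\<not> ?b t" using while_option_stop[OF t] .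
  obtain c ps where tc: "t = (c, ps)" by (cases t)
  have res: "sweep_cycles_LOR m \<pi> = ps" unfolding sweep_cycles_LOR_def using t tc by simp
  have oi: "outer_inv m \<pi> c ps" using Pt tc by simp
  have fixed: "\<forall>i\<in>{1..m}. fst c i = Some i" using bt tc by simp
  have O: "snd c = None" "exec ps (init_conf m \<pi>) = c" "set ps \<subseteq> {1..m}"
    using oi unfolding outer_inv_def by auto
  obtain Zs where Zs: "finite Zs" "\<forall>Z\<in>Zs. \<pi> ` Z = Z \<and> Z \<noteq> {} \<and> (\<forall>z\<in>Z. \<pi> z \<noteq> z)"
     "\<forall>A\<in>Zs. \<forall>B\<in>Zs. A \<noteq> B \<longrightarrow> A \<inter> B = {}" "\<Union>Zs = Dset m \<pi> c"
     "length ps = card (Dset m \<pi> c) + card Zs"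
    using oi unfolding outer_inv_def by (elim conjE exE) metis
  have valid: "valid_plan m \<pi> ps" unfolding valid_plan_def Let_def using O fixed by simp
  have Dall: "Dset m \<pi> c = {j\<in>{1..m}. \<pi> j \<noteq> j}" using fixed unfolding Dset_def by auto
  have sub: "\<Union>Zs \<subseteq> {1..m}" using Zs(4) unfolding Dset_def by auto
  have "length ps \<le> length qs" if "valid_plan m \<pi> qs" for qs
  proof -
    have "card {j\<in>{1..m}. \<pi> j \<noteq> j} + card Zs \<le> length qs"
      by (rule lower[OF perm that Zs(1) _ _ sub]) (use Zs(2,3) in auto)
    then show ?thesis using Zs(5) Dall by simp
  qed
  then show ?thesis using valid res by simp
qed

end
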